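(* Let $W:\mathcal X\to\mathcal Y$ and $Q:\mathcal X\to\mathcal Z$ be DMCs with $W\preccurlyeq Q$, and fix an input distribution. Then $$I(Q)-I(W)\ \ge\ \sum_{z\in\mathcal Z}\frac12\sum_{y\in\mathcal A_z}\pi_y\|\mathbf z-\mathbf y\|_2^2 .$$
   Context: $\mathcal X,\mathcal Y,\mathcal Z$ are finite, pairwise disjoint. $W\preccurlyeq Q$ means there is a channel $\Phi:\mathcal Z\to\mathcal Y$ with $W(y|x)=\sum_zQ(z|x)\Phi(y|z)$. A fixed input distribution $\pi(x)>0$ induces output probabilities $\pi_y=\sum_x\pi(x)W(y|x)$ and $\pi_z=\sum_x\pi(x)Q(z|x)$ (assumed positive), and posterior vectors $\mathbf y=(y_x)_{x\in\mathcal X}$, $y_x=\pi(x)W(y|x)/\pi_y$, and $\mathbf z=(z_x)_{x\in\mathcal X}$, $z_x=\pi(x)Q(z|x)/\pi_z$. $I(\cdot)$ is input–output mutual information (natural log). For $z\in\mathcal Z$, $\mathcal A_z=\{y\in\mathcal Y: z=\arg\min_{z'\in\mathcal Z}\|\mathbf z'-\mathbf y\|_2^2\}$, where ties in the argmin are broken in a fixed arbitrary way, so that the sets $\mathcal A_z$ partition $\mathcal Y$; $\|\cdot\|_2$ is the Euclidean norm. *)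

theory Defs
  imports Main "HOL-Analysis.Analysis"
begin

text \<open>A DMC from input alphabet 'a to output alphabet 'b is a stochastic
  matrix W, with W x y = W(y|x).\<close>
definition channel :: "('a::finite \<Rightarrow> 'b::finite \<Rightarrow> real) \<Rightarrow> bool" where
  "channel W \<longleftrightarrow> (\<forall>x y. W x y \<ge> 0) \<and> (\<forall>x. (\<Sum>y\<in>UNIV. W x y) = 1)"

definition degraded :: "('x::finite \<Rightarrow> 'y::finite \<Rightarrow> real) \<Rightarrow> ('x \<Rightarrow> 'z::finite \<Rightarrow> real) \<Rightarrow> bool" where
  "degraded W Q \<longleftrightarrow> (\<exists>Phi :: 'z \<Rightarrow> 'y \<Rightarrow> real. channel Phi \<and>
      (\<forall>x y. W x y = (\<Sum>z\<in>UNIV. Q x z * Phi z y)))"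

definition out_prob :: "('x::finite \<Rightarrow> real) \<Rightarrow> ('x \<Rightarrow> 'y \<Rightarrow> real) \<Rightarrow> 'y \<Rightarrow> real" where
  "out_prob p W y = (\<Sum>x\<in>UNIV. p x * W x y)"

definition posterior :: "('x::finite \<Rightarrow> real) \<Rightarrow> ('x \<Rightarrow> 'y \<Rightarrow> real) \<Rightarrow> 'y \<Rightarrow> 'x \<Rightarrow> real" where
  "posterior p W y = (\<lambda>x. p x * W x y / out_prob p W y)"

definition mutual_info :: "('x::finite \<Rightarrow> real) \<Rightarrow> ('x \<Rightarrow> 'y::finite \<Rightarrow> real) \<Rightarrow> real" where
  "mutual_info p W = (\<Sum>x\<in>UNIV. \<Sum>y\<in>UNIV.
      (if p x * W x y = 0 then 0 else p x * W x y * ln (W x y / out_prob p W y)))"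

definition sqdist :: "('x::finite \<Rightarrow> real) \<Rightarrow> ('x \<Rightarrow> real) \<Rightarrow> real" where
  "sqdist u v = (\<Sum>x\<in>UNIV. (u x - v x)^2)"

end

theory Submission
  imports Defs
begin

lemma key_ineq:
  fixes a b :: real assumes a: "0<a" "a\<le>1" and b: "0<b" "b\<le>1"
  shows "a * ln (a/b) \<ge> (a-b) + (a-b)^2/2"
proof -
  define h where "h t = a*ln a - a*ln t - a + t - (a-t)^2/2" for t
  have d: "DERIV h t :> (t - a) * (1/t - 1)" if "t > 0" for t
    unfolding h_def using that a
    by (auto intro!: derivative_eq_intros simp: field_simps power2_eq_square)
  have ha: "h a = 0" unfolding h_def by simp
  have "h b \<ge> 0"
  proof (cases "a \<le> b")
    case True
    have "h a \<le> h b"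
    proof (rule DERIV_nonneg_imp_nondecreasing[OF True])
      fix t assume t: "a \<le> t" "t \<le> b"
      have "(t - a) * (1/t - 1) \<ge> 0" using t a b by (intro mult_nonneg_nonneg) (auto simp: field_simps)
      then show "\<exists>y. DERIV h t :> y \<and> y \<ge> 0" using d[of t] t a by auto
    qed
    then show ?thesis using ha by simp
  next
    case False
    have "h a \<le> h b"
    proof (rule DERIV_nonpos_imp_nonincreasing[of b a h])
      show "b \<le> a" using False by simp
      fix t assume t: "b \<le> t" "t \<le> a"
      have "(t - a) * (1/t - 1) \<le> 0" using t a b by (intro mult_nonpos_nonneg) (auto simp: field_simps)
      then show "\<exists>y. DERIV h t :> y \<and> y \<le> 0" using d[of t] t b by auto
    qed
    then show ?thesis using ha by simp
  qed
  moreover have "a * ln (a/b) = a*ln a - a*ln b" using a b by (simp add: ln_div right_diff_distrib)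
  ultimately show ?thesis unfolding h_def by simp
qed

lemma T_ineq:
  fixes a b :: real assumes "0\<le>a" "a\<le>1" "0\<le>b" "b\<le>1" "a > 0 \<longrightarrow> b > 0"
  shows "(if a = 0 then 0 else a * ln (a/b)) \<ge> (a-b) + (a-b)^2/2"
proof (cases "a = 0")
  case True
  have "b^2 \<le> b" using assms by (simp add: power2_eq_square mult_left_le)
  then show ?thesis using True assms by simp
next
  case False
  then show ?thesis using key_ineq[of a b] assms by simp
qed


theorem lemma10:
  fixes W :: "'x::finite \<Rightarrow> 'y::finite \<Rightarrow> real"
    and Q :: "'x \<Rightarrow> 'z::finite \<Rightarrow> real"
    and p :: "'x \<Rightarrow> real"
    and g :: "'y \<Rightarrow> 'z"
  assumes W: "channel W" and Q: "channel Q"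
    and deg: "degraded W Q"
    and p_pos: "\<forall>x. p x > 0" and p_sum: "(\<Sum>x\<in>UNIV. p x) = 1"
    and py_pos: "\<forall>y. out_prob p W y > 0"
    and pz_pos: "\<forall>z. out_prob p Q z > 0"
    and g_argmin: "\<forall>y z'. sqdist (posterior p Q (g y)) (posterior p W y)
                          \<le> sqdist (posterior p Q z') (posterior p W y)"
  shows "mutual_info p Q - mutual_info p W \<ge>
    (\<Sum>z\<in>UNIV. 1/2 * (\<Sum>y\<in>{y. g y = z}.
        out_prob p W y * sqdist (posterior p Q z) (posterior p W y)))"
proof -
  obtain Phi :: "'z \<Rightarrow> 'y \<Rightarrow> real" where Phi: "channel Phi"
    and Wd: "\<And>x y. W x y = (\<Sum>z\<in>UNIV. Q x z * Phi z y)"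
    using deg unfolding degraded_def by blast
  have Phi0: "\<And>z y. Phi z y \<ge> 0" and Phi1: "\<And>z. (\<Sum>y\<in>UNIV. Phi z y) = 1"
    using Phi unfolding channel_def by auto
  have Q0: "\<And>x z. Q x z \<ge> 0" using Q unfolding channel_def by auto
  have W0: "\<And>x y. W x y \<ge> 0" using W unfolding channel_def by auto
  define piy where "piy y = out_prob p W y" for y
  define piz where "piz z = out_prob p Q z" for z
  define zv where "zv z = posterior p Q z" for z
  define yv where "yv y = posterior p W y" for y
  define c where "c y z = piz z * Phi z y" for y z
  define LQ where "LQ x z = (if p x * Q x z = 0 then 0 else ln (Q x z / piz z))" for x z
  define LW where "LW x y = (if p x * W x y = 0 then 0 else ln (W x y / piy y))" for x y
  define Tx where "Tx z y x = (if zv z x = 0 then 0 else zv z x * ln (zv z x / yv y x))" for z y x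
  define K where "K y = 1/2 * sqdist (zv (g y)) (yv y)" for y
  have piyp: "\<And>y. piy y > 0" using py_pos piy_def by simp
  have pizp: "\<And>z. piz z > 0" using pz_pos piz_def by simp
  have pp: "\<And>x. p x > 0" using p_pos by simp
  have A: "mutual_info p Q = (\<Sum>x\<in>UNIV. \<Sum>z\<in>UNIV. \<Sum>y\<in>UNIV. p x * Q x z * Phi z y * LQ x z)"
  proof -
    have "\<And>x z. (\<Sum>y\<in>UNIV. p x * Q x z * Phi z y * LQ x z) = p x * Q x z * LQ x z"
    proof -
      fix x z
      have "(\<Sum>y\<in>UNIV. p x * Q x z * Phi z y * LQ x z) = p x * Q x z * LQ x z * (\<Sum>y\<in>UNIV. Phi z y)"
        by (simp add: sum_distrib_left mult_ac)
      then show "(\<Sum>y\<in>UNIV. p x * Q x z * Phi z y * LQ x z) = p x * Q x z * LQ x z" using Phi1 by simp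
    qed
    moreover have "mutual_info p Q = (\<Sum>x\<in>UNIV. \<Sum>z\<in>UNIV. p x * Q x z * LQ x z)"
      unfolding mutual_info_def LQ_def piz_def by (intro sum.cong) auto
    ultimately show ?thesis by simp
  qed
  have B: "mutual_info p W = (\<Sum>x\<in>UNIV. \<Sum>z\<in>UNIV. \<Sum>y\<in>UNIV. p x * Q x z * Phi z y * LW x y)"
  proof -
    have "mutual_info p W = (\<Sum>x\<in>UNIV. \<Sum>y\<in>UNIV. p x * W x y * LW x y)"
      unfolding mutual_info_def LW_def piy_def by (intro sum.cong) auto
    also have "\<dots> = (\<Sum>x\<in>UNIV. \<Sum>y\<in>UNIV. \<Sum>z\<in>UNIV. p x * Q x z * Phi z y * LW x y)"
      unfolding Wd by (simp add: sum_distrib_left sum_distrib_right mult_ac)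
    also have "\<dots> = (\<Sum>x\<in>UNIV. \<Sum>z\<in>UNIV. \<Sum>y\<in>UNIV. p x * Q x z * Phi z y * LW x y)"
      by (intro sum.cong refl sum.swap)
    finally show ?thesis .
  qed
  have pt: "p x * Q x z * Phi z y * LQ x z - p x * Q x z * Phi z y * LW x y = c y z * Tx z y x" for x y z
  proof (cases "p x * Q x z * Phi z y = 0")
    case True
    then have "Q x z = 0 \<or> Phi z y = 0" using pp[of x] by auto
    then show ?thesis
    proof
      assume "Q x z = 0" then show ?thesis by (simp add: Tx_def zv_def posterior_def)
    next
      assume "Phi z y = 0" then show ?thesis by (simp add: c_def)
    qed
  next
    case False
    then have Qp: "Q x z > 0" and Pp: "Phi z y > 0" using Q0[of x z] Phi0[of z y] by (auto simp: less_le)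
    have "Q x z * Phi z y \<le> W x y" unfolding Wd
      by (rule member_le_sum[where f="\<lambda>z. Q x z * Phi z y"]) (auto intro: mult_nonneg_nonneg Q0 Phi0)
    then have Wp: "W x y > 0" using Qp Pp by (smt (verit) mult_pos_pos)
    have px: "p x > 0" by (rule pp)
    have zvp: "zv z x > 0" using px Qp pizp[of z] by (simp add: zv_def posterior_def piz_def)
    have e1: "LQ x z = ln (Q x z) - ln (piz z)" using px Qp pizp[of z] by (simp add: LQ_def ln_div)
    have e2: "LW x y = ln (W x y) - ln (piy y)" using px Wp piyp[of y] by (simp add: LW_def ln_div)
    have e3: "ln (zv z x / yv y x) = (ln (p x) + ln (Q x z) - ln (piz z)) - (ln (p x) + ln (W x y) - ln (piy y))"
      using px Qp Wp pizp[of z] piyp[of y]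
      by (simp add: zv_def yv_def posterior_def piz_def piy_def ln_div ln_mult)
    have e4: "c y z * zv z x = p x * Q x z * Phi z y"
      using pizp[of z] by (simp add: c_def zv_def posterior_def piz_def)
    have "c y z * Tx z y x = (c y z * zv z x) * ln (zv z x / yv y x)" using zvp by (simp add: Tx_def)
    also have "\<dots> = p x * Q x z * Phi z y * (LQ x z - LW x y)" unfolding e4 e3 e1 e2 by simp
    finally show ?thesis by (simp add: right_diff_distrib)
  qed
  have C: "mutual_info p Q - mutual_info p W = (\<Sum>y\<in>UNIV. \<Sum>z\<in>UNIV. c y z * (\<Sum>x\<in>UNIV. Tx z y x))"
  proof -
    have "mutual_info p Q - mutual_info p W = (\<Sum>x\<in>UNIV. \<Sum>z\<in>UNIV. \<Sum>y\<in>UNIV. c y z * Tx z y x)"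
      unfolding A B by (simp add: sum_subtractf[symmetric] pt)
    also have "\<dots> = (\<Sum>z\<in>UNIV. \<Sum>x\<in>UNIV. \<Sum>y\<in>UNIV. c y z * Tx z y x)" by (rule sum.swap)
    also have "\<dots> = (\<Sum>z\<in>UNIV. \<Sum>y\<in>UNIV. \<Sum>x\<in>UNIV. c y z * Tx z y x)" by (intro sum.cong refl sum.swap)
    also have "\<dots> = (\<Sum>y\<in>UNIV. \<Sum>z\<in>UNIV. \<Sum>x\<in>UNIV. c y z * Tx z y x)" by (rule sum.swap)
    finally show ?thesis by (simp add: sum_distrib_left)
  qed
  have c0: "\<And>y z. c y z \<ge> 0" using pizp Phi0 by (simp add: c_def less_imp_le)
  have sumz: "\<And>z. (\<Sum>x\<in>UNIV. zv z x) = 1"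
    using pizp by (simp add: zv_def posterior_def piz_def out_prob_def sum_divide_distrib[symmetric] less_imp_neq[symmetric])
  have sumy: "\<And>y. (\<Sum>x\<in>UNIV. yv y x) = 1"
    using piyp by (simp add: yv_def posterior_def piy_def out_prob_def sum_divide_distrib[symmetric] less_imp_neq[symmetric])
  have zv0: "\<And>z x. zv z x \<ge> 0" using pz_pos p_pos Q0 by (simp add: zv_def posterior_def less_imp_le)
  have yv0: "\<And>y x. yv y x \<ge> 0" using py_pos p_pos W0 by (simp add: yv_def posterior_def less_imp_le)
  have zv1: "zv z x \<le> 1" for z x
  proof -
    have "zv z x \<le> (\<Sum>x\<in>UNIV. zv z x)" by (rule member_le_sum) (auto intro: zv0)
    then show ?thesis using sumz by simp
  qed
  have yv1: "yv y x \<le> 1" for y x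
  proof -
    have "yv y x \<le> (\<Sum>x\<in>UNIV. yv y x)" by (rule member_le_sum) (auto intro: yv0)
    then show ?thesis using sumy by simp
  qed
  have D: "c y z * (\<Sum>x\<in>UNIV. Tx z y x) \<ge> c y z * K y" for y z
  proof (cases "c y z = 0")
    case True then show ?thesis by simp
  next
    case False
    then have Pp: "Phi z y > 0" using Phi0[of z y] by (auto simp: c_def less_le)
    have imp: "zv z x > 0 \<longrightarrow> yv y x > 0" for x
    proof
      assume "zv z x > 0"
      then have Qp: "Q x z > 0" using Q0[of x z] by (auto simp: zv_def posterior_def less_le)
      have "Q x z * Phi z y \<le> W x y" unfolding Wd
        by (rule member_le_sum[where f="\<lambda>z. Q x z * Phi z y"]) (auto intro: mult_nonneg_nonneg Q0 Phi0)
      then have Wp: "W x y > 0" using Qp Pp by (smt (verit) mult_pos_pos)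
      then show "yv y x > 0" using pp[of x] piyp[of y] by (simp add: yv_def posterior_def piy_def)
    qed
    have "(\<Sum>x\<in>UNIV. Tx z y x) \<ge> (\<Sum>x\<in>UNIV. (zv z x - yv y x) + (zv z x - yv y x)^2/2)"
      unfolding Tx_def by (rule sum_mono, rule T_ineq) (use zv0 zv1 yv0 yv1 imp in auto)
    also have "(\<Sum>x\<in>UNIV. (zv z x - yv y x) + (zv z x - yv y x)^2/2) = 1/2 * sqdist (zv z) (yv y)"
      using sumz[of z] sumy[of y]
      by (simp add: sum.distrib sum_subtractf sqdist_def sum_divide_distrib[symmetric])
    also have "1/2 * sqdist (zv z) (yv y) \<ge> K y" using g_argmin by (simp add: K_def zv_def yv_def)
    finally show ?thesis using c0[of y z] by (simp add: mult_left_mono)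
  qed
  have E: "(\<Sum>z\<in>UNIV. c y z) = piy y" for y
  proof -
    have "(\<Sum>z\<in>UNIV. c y z) = (\<Sum>z\<in>UNIV. \<Sum>x\<in>UNIV. p x * Q x z * Phi z y)"
      by (simp add: c_def piz_def out_prob_def sum_distrib_right)
    also have "\<dots> = (\<Sum>x\<in>UNIV. \<Sum>z\<in>UNIV. p x * Q x z * Phi z y)" by (rule sum.swap)
    also have "\<dots> = piy y" by (simp add: piy_def out_prob_def Wd sum_distrib_left mult_ac)
    finally show ?thesis .
  qed
  have "mutual_info p Q - mutual_info p W \<ge> (\<Sum>y\<in>UNIV. \<Sum>z\<in>UNIV. c y z * K y)"
    unfolding C by (intro sum_mono D)
  also have "(\<Sum>y\<in>UNIV. \<Sum>z\<in>UNIV. c y z * K y) = (\<Sum>y\<in>UNIV. piy y * K y)"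
    by (simp add: sum_distrib_right[symmetric] E)
  also have "(\<Sum>y\<in>UNIV. piy y * K y) = (\<Sum>z\<in>UNIV. \<Sum>y\<in>{y. g y = z}. piy y * K y)"
    using sum.group[of "UNIV :: 'y set" "UNIV :: 'z set" g "\<lambda>y. piy y * K y"] by simp
  also have "\<dots> = (\<Sum>z\<in>UNIV. 1/2 * (\<Sum>y\<in>{y. g y = z}.
        out_prob p W y * sqdist (posterior p Q z) (posterior p W y)))"
    by (simp add: sum_distrib_left K_def piy_def zv_def yv_def mult_ac)
  finally show ?thesis .
qed

end
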